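(* Let $G$ be a finite simple graph and let $\mathcal{P}'\subset\mathcal{P}$ be sets of vertices of $G$, with no two vertices of $\mathcal{P}$ adjacent, $|\mathcal{P}'|=m_0$ and $|\mathcal{P}|=m_0+m$ ($m_0,m\ge0$ integers). If the pinned graph $(G,\mathcal{P}')$ is $k$-admissible, then the pinned graph $(G,\mathcal{P})$ is $(k+m)$-admissible.
   Context: For a pinned graph $(G,\mathcal{Q})$ with $G=(\mathcal{V},\mathcal{E})$ and $q=|\mathcal{Q}|$, a construction order is an ordering $v_1,\dots,v_l$ of $\mathcal{V}$ whose first $q$ entries are exactly the vertices of $\mathcal{Q}$; for $i>q$ the back-degree of $v_i$ is the number of vertices among $v_1,\dots,v_{i-1}$ adjacent to $v_i$. $(G,\mathcal{Q})$ is $k$-admissible if some construction order has all back-degrees (for $i>q$) at most $k$. *)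

theory Defs
  imports Main
begin

definition simple_graph :: "'a set \<Rightarrow> ('a \<Rightarrow> 'a \<Rightarrow> bool) \<Rightarrow> bool" where
  "simple_graph V E \<longleftrightarrow> finite V \<and> (\<forall>u v. E u v \<longrightarrow> u \<in> V \<and> v \<in> V)
     \<and> (\<forall>u v. E u v \<longrightarrow> E v u) \<and> (\<forall>v. \<not> E v v)"

definition construction_order :: "'a set \<Rightarrow> 'a set \<Rightarrow> 'a list \<Rightarrow> bool" where
  "construction_order V Q vs \<longleftrightarrow> distinct vs \<and> set vs = V \<and> set (take (card Q) vs) = Q"

definition back_degree :: "('a \<Rightarrow> 'a \<Rightarrow> bool) \<Rightarrow> 'a list \<Rightarrow> nat \<Rightarrow> nat" where
  "back_degree E vs i = card {j. j < i \<and> E (vs ! j) (vs ! i)}"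

definition admissible :: "nat \<Rightarrow> 'a set \<Rightarrow> ('a \<Rightarrow> 'a \<Rightarrow> bool) \<Rightarrow> 'a set \<Rightarrow> bool" where
  "admissible k V E Q \<longleftrightarrow> (\<exists>vs. construction_order V Q vs \<and>
     (\<forall>i. card Q \<le> i \<and> i < length vs \<longrightarrow> back_degree E vs i \<le> k))"

end

theory Submission
  imports Defs
begin

lemma bd_split:
  assumes "distinct (ys @ v # zs)"
  shows "back_degree E (ys @ v # zs) (length ys) = card {u \<in> set ys. E u v}"
proof -
  let ?xs = "ys @ v # zs"
  have eq: "{u \<in> set ys. E u v} = (\<lambda>j. ?xs ! j) ` {j. j < length ys \<and> E (?xs ! j) (?xs ! length ys)}"
  proof
    show "{u \<in> set ys. E u v} \<subseteq> (\<lambda>j. ?xs ! j) ` {j. j < length ys \<and> E (?xs ! j) (?xs ! length ys)}"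
    proof
      fix u assume "u \<in> {u \<in> set ys. E u v}"
      then obtain j where "j < length ys" "ys ! j = u" "E u v" by (auto simp: in_set_conv_nth)
      then show "u \<in> (\<lambda>j. ?xs ! j) ` {j. j < length ys \<and> E (?xs ! j) (?xs ! length ys)}"
        by (auto simp: nth_append intro!: image_eqI[of _ _ j])
    qed
  qed (auto simp: nth_append)
  have inj: "inj_on (\<lambda>j. ?xs ! j) {j. j < length ys \<and> E (?xs ! j) (?xs ! length ys)}"
    using assms by (auto simp: inj_on_def nth_eq_iff_index_eq)
  show ?thesis unfolding back_degree_def eq card_image[OF inj] by simp
qed

lemma filter_split:
  "filter Q xs = B1 @ v # B2 \<Longrightarrow> \<exists>xs1 xs2. xs = xs1 @ v # xs2 \<and> filter Q xs1 = B1 \<and> Q v"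
proof (induction B1 arbitrary: xs)
  case Nil
  then show ?case by (auto dest!: filter_eq_ConsD)
next
  case (Cons b B1)
  then obtain us ws where "xs = us @ b # ws" "\<forall>u\<in>set us. \<not> Q u" "Q b" "B1 @ v # B2 = filter Q ws"
    by (auto dest!: filter_eq_ConsD)
  moreover from Cons.IH[of ws] this(4) obtain ws1 ws2 where "ws = ws1 @ v # ws2" "filter Q ws1 = B1" "Q v"
    by auto
  ultimately show ?case by (intro exI[of _ "us @ b # ws1"] exI[of _ ws2]) auto
qed

theorem proposition4p5:
  fixes V :: "'a set" and E :: "'a \<Rightarrow> 'a \<Rightarrow> bool" and P P' :: "'a set" and k m0 m :: nat
  assumes "simple_graph V E"
    and "P' \<subseteq> P" and "P \<subseteq> V"
    and "\<forall>u\<in>P. \<forall>v\<in>P. \<not> E u v"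
    and "card P' = m0" and "card P = m0 + m"
    and "admissible k V E P'"
  shows "admissible (k + m) V E P"
proof -
  have finV: "finite V" using assms(1) by (simp add: simple_graph_def)
  have finP: "finite P" using finV assms(3) finite_subset by blast
  have finP': "finite P'" using finP assms(2) finite_subset by blast
  have cardD: "card (P - P') = m" using assms(2,5,6) finP' by (simp add: card_Diff_subset)
  obtain vs where co: "construction_order V P' vs"
    and bd: "\<forall>i. card P' \<le> i \<and> i < length vs \<longrightarrow> back_degree E vs i \<le> k"
    using assms(7) unfolding admissible_def by blast
  have dvs: "distinct vs" and svs: "set vs = V" and tvs: "set (take (card P') vs) = P'"
    using co by (auto simp: construction_order_def)
  define A where "A = filter (\<lambda>x. x \<in> P) vs"
  define B where "B = filter (\<lambda>x. x \<notin> P) vs"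
  define ws where "ws = A @ B"
  have sA: "set A = P" using assms(3) svs by (auto simp: A_def)
  have lA: "length A = card P" using sA dvs by (metis A_def distinct_card distinct_filter)
  have dws: "distinct ws" using dvs by (auto simp: ws_def A_def B_def)
  have sws: "set ws = V" using svs by (auto simp: ws_def A_def B_def)
  have tws: "set (take (card P) ws) = P" using lA sA by (simp add: ws_def)
  have "back_degree E ws i \<le> k + m" if i: "card P \<le> i" "i < length ws" for i
  proof -
    define j where "j = i - length A"
    have jB: "j < length B" using i lA by (simp add: j_def ws_def)
    obtain B1 v B2 where Bdec: "B = B1 @ v # B2" and lB1: "length B1 = j"
      using id_take_nth_drop[OF jB] by (metis length_take min_absorb2 less_imp_le jB)
    have wsdec: "ws = (A @ B1) @ v # B2" and il: "i = length (A @ B1)"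
      using Bdec lB1 i lA by (auto simp: ws_def j_def)
    have "filter (\<lambda>x. x \<notin> P) vs = B1 @ v # B2" using Bdec B_def by simp
    then obtain vs1 vs2 where vsdec: "vs = vs1 @ v # vs2" and fB1: "filter (\<lambda>x. x \<notin> P) vs1 = B1"
      and vnP: "v \<notin> P"
      using filter_split[of "\<lambda>x. x \<notin> P" vs B1 v B2] by blast
    have d1: "distinct ((A @ B1) @ v # B2)" using dws wsdec by simp
    have d2: "distinct (vs1 @ v # vs2)" using dvs vsdec by simp
    have len: "card P' \<le> length vs1"
    proof (rule ccontr)
      assume "\<not> ?thesis"
      then obtain d where "card P' - length vs1 = Suc d" by (metis Suc_diff_Suc not_le)
      then have "v \<in> set (take (card P') vs)" using vsdec
        by (auto simp: take_append)
      then show False using tvs vnP assms(2) by auto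
    qed
    have P'sub: "P' \<subseteq> set vs1"
    proof -
      have "take (card P') vs = take (card P') vs1" using vsdec len by (simp add: take_append)
      then show ?thesis using tvs set_take_subset by metis
    qed
    have "back_degree E vs (length vs1) \<le> k" using bd len vsdec by simp
    then have kb: "card {u \<in> set vs1. E u v} \<le> k" using bd_split[OF d2] vsdec by simp
    have B1sub: "set B1 \<subseteq> set vs1" using fB1 by auto
    have sub: "{u \<in> set (A @ B1). E u v} \<subseteq> {u \<in> set vs1. E u v} \<union> (P - P')"
      using sA B1sub P'sub by auto
    have "card {u \<in> set (A @ B1). E u v} \<le> card ({u \<in> set vs1. E u v} \<union> (P - P'))"
      by (rule card_mono) (use sub finP in auto)
    also have "\<dots> \<le> card {u \<in> set vs1. E u v} + card (P - P')" by (rule card_Un_le)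
    finally have "card {u \<in> set (A @ B1). E u v} \<le> k + m" using kb cardD by simp
    then show ?thesis using bd_split[OF d1] wsdec il by simp
  qed
  then show ?thesis unfolding admissible_def construction_order_def
    using dws sws tws by blast
qed

end
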